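(* For all integers $k,r\geq 1$, $AW(k;r)$ exists (i.e., is finite) and satisfies $AW(k;r)\le k^{2r-1}$.
   Context: A sequence of positive integers $w_1<w_2<\dots<w_n$ is an ascending wave if $w_{i+1}-w_i \geq w_i-w_{i-1}$ for $2\le i\le n-1$. For positive integers $k,r$, $AW(k;r)$ denotes the least positive integer $N$ such that every $r$-coloring of $\{1,2,\dots,N\}$ contains a $k$-term monochromatic ascending wave. *)

theory Defs
  imports Main
begin

definition ascending_wave :: "(nat \<Rightarrow> nat) \<Rightarrow> nat \<Rightarrow> bool" where
  "ascending_wave w k \<longleftrightarrow>
     (\<forall>i<k. 0 < w i) \<and>
     (\<forall>i. i + 1 < k \<longrightarrow> w i < w (i + 1)) \<and>
     (\<forall>i. i + 2 < k \<longrightarrow> w (i + 1) - w i \<le> w (i + 2) - w (i + 1))"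

definition AW_property :: "nat \<Rightarrow> nat \<Rightarrow> nat \<Rightarrow> bool" where
  "AW_property k r N \<longleftrightarrow>
     (\<forall>c :: nat \<Rightarrow> nat. (\<forall>x\<in>{1..N}. c x < r) \<longrightarrow>
        (\<exists>w. ascending_wave w k \<and> (\<forall>i<k. w i \<in> {1..N}) \<and>
             (\<exists>col. \<forall>i<k. c (w i) = col)))"

definition AW :: "nat \<Rightarrow> nat \<Rightarrow> nat" where
  "AW k r = (LEAST N. 0 < N \<and> AW_property k r N)"

end

theory Submission
  imports Defs
begin


lemma greedy:
  fixes M k L a col :: nat and c :: "nat \<Rightarrow> nat"
  assumes M1: "1 \<le> M" and hML: "M*k*k \<le> L" and k1: "1 \<le> k"
    and win: "\<forall>b. a \<le> b \<longrightarrow> b+M \<le> a+L \<longrightarrow> (\<exists>x\<in>{b+1..b+M}. c x = col)"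
  shows "\<exists>w. ascending_wave w k \<and> (\<forall>i<k. w i \<in> {a+1..a+L} \<and> c (w i) = col)"
proof -
  have inv: "1 \<le> m \<Longrightarrow> m \<le> k \<Longrightarrow> (\<exists>w d. (\<forall>i<m. c (w i) = col \<and> a < w i \<and> w i \<le> w (m-1))
     \<and> (\<forall>i. i+1<m \<longrightarrow> w i < w (i+1))
     \<and> (\<forall>i. i+2<m \<longrightarrow> w(i+1)-w i \<le> w(i+2)-w(i+1))
     \<and> 1 \<le> d \<and> d \<le> m*M \<and> (2 \<le> m \<longrightarrow> w(m-1) - w(m-2) \<le> d)
     \<and> 2*w(m-1) \<le> 2*a + M*m*(m+1))" for m
  proof (induction m)
    case 0 then show ?case by simp
  next
    case (Suc m)
    show ?case
    proof (cases "m = 0")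
      case True
      have "a + M \<le> a + L" using hML k1 M1
        by (metis add_le_mono1 add.commute le_trans mult_le_mono2 nat_mult_1_right)
      then obtain x where x: "x \<in> {a+1..a+M}" "c x = col" using win by fastforce
      show ?thesis using True x M1
        by (intro exI[of _ "\<lambda>_. x"] exI[of _ 1]) auto
    next
      case False
      with Suc obtain w d where
        h1: "\<forall>i<m. c (w i) = col \<and> a < w i \<and> w i \<le> w (m-1)"
        and h2: "\<forall>i. i+1<m \<longrightarrow> w i < w (i+1)"
        and h3: "\<forall>i. i+2<m \<longrightarrow> w(i+1)-w i \<le> w(i+2)-w(i+1)"
        and h4: "1 \<le> d" "d \<le> m*M" and h5: "2 \<le> m \<longrightarrow> w(m-1) - w(m-2) \<le> d"
        and h6: "2*w(m-1) \<le> 2*a + M*m*(m+1)" by auto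
      define p where "p = w (m-1)"
      have pa: "a < p" using h1 False p_def by auto
      have mk: "m + 1 \<le> k" using Suc by simp
      have "M*(m+1)*(m+2) \<le> M*k*(k+1)"
        using mk by (intro mult_le_mono) auto
      also have "\<dots> \<le> 2 * (M*k*k)" using k1 by (simp add: algebra_simps)
      finally have A: "M*(m+1)*(m+2) \<le> 2*L" using hML by linarith
      have B: "2*(p + d + M - 1) \<le> 2*a + M*(m+1)*(m+2)"
      proof -
        have "2*(p+d+M-1) \<le> 2*p + 2*(m*M) + 2*M" using h4 by linarith
        also have "\<dots> \<le> 2*a + M*m*(m+1) + 2*(m*M) + 2*M" using h6 p_def by linarith
        also have "\<dots> = 2*a + M*(m+1)*(m+2)" by (simp add: algebra_simps)
        finally show ?thesis .
      qed
      have "a \<le> p + d - 1" "p + d - 1 + M \<le> a + L" using pa h4 A B by linarith+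
      then obtain q where q: "q \<in> {p+d-1+1..p+d-1+M}" "c q = col" using win by blast
      have qp: "p < q" "q - p \<ge> d" "q - p \<le> d + M - 1" using q h4 by auto
      define w' where "w' = w(m := q)"
      have W: "\<And>i. i < m \<Longrightarrow> w' i = w i" "w' m = q" unfolding w'_def by auto
      have m1: "w' (Suc m - 1) = q" using W by simp
      show ?thesis
      proof (intro exI[of _ w'] exI[of _ "q - p"] conjI allI impI)
        fix i assume i: "i < Suc m"
        show "c (w' i) = col" using i W h1 q by (cases "i = m") auto
        show "a < w' i" using i W h1 q pa qp by (cases "i = m") auto
        show "w' i \<le> w' (Suc m - 1)"
        proof (cases "i = m")
          case True then show ?thesis using m1 W by simp
        next
          case False
          then have "i < m" using i by simp
          then have "w' i \<le> p" using W h1 p_def by simp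
          then show ?thesis using qp m1 by simp
        qed
      next
        fix i assume i: "i + 1 < Suc m"
        show "w' i < w' (i+1)"
        proof (cases "i + 1 = m")
          case True then show ?thesis using W qp p_def by (metis add_diff_cancel_right' less_add_one)
        next
          case False then show ?thesis using i W h2 by auto
        qed
      next
        fix i assume i: "i + 2 < Suc m"
        show "w'(i+1)-w' i \<le> w'(i+2)-w'(i+1)"
        proof (cases "i + 2 = m")
          case True
          then have "w'(i+1) = p" "w' i = w (m-2)" "w'(i+2) = q" using W p_def by auto
          have i1: "i + 1 = m - 1" "i = m - 2" "i + 2 = m" using True by auto
          have e: "w'(i+1)-w' i = w(m-1) - w(m-2)" "w'(i+2)-w'(i+1) = q - p"
          proof -
            have a1: "w'(i+1) = p" using i1(1) W(1)[of "m-1"] False p_def by simp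
            have a2: "w' i = w(m-2)" using i1(2) W(1)[of "m-2"] False by simp
            have a3: "w'(i+2) = q" using i1(3) W(2) by simp
            show "w'(i+1)-w' i = w(m-1) - w(m-2)" using a1 a2 p_def by simp
            show "w'(i+2)-w'(i+1) = q - p" using a1 a3 by simp
          qed
          have "w(m-1) - w(m-2) \<le> d" using h5 True by simp
          then show ?thesis unfolding e using qp by linarith
        next
          case False then show ?thesis using i W h3 by auto
        qed
      next
        show "1 \<le> q - p" using qp h4 by linarith
        show "q - p \<le> Suc m * M" using qp h4 by (simp add: algebra_simps)
        show "w' (Suc m - 1) - w' (Suc m - 2) \<le> q - p"
        proof -
          have "Suc m - 2 = m - 1" by simp
          then have "w' (Suc m - 2) = p" using W(1)[of "m-1"] False p_def by simp
          then show ?thesis using m1 by simp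
        qed
        have "2*q \<le> 2*(p + d + M - 1)" using q h4 by auto
        then show "2 * w' (Suc m - 1) \<le> 2 * a + M * Suc m * (Suc m + 1)" using B m1
          by (simp add: algebra_simps)
      qed
    qed
  qed
  obtain w d where
    h1: "\<forall>i<k. c (w i) = col \<and> a < w i \<and> w i \<le> w (k-1)"
    and h2: "\<forall>i. i+1<k \<longrightarrow> w i < w (i+1)"
    and h3: "\<forall>i. i+2<k \<longrightarrow> w(i+1)-w i \<le> w(i+2)-w(i+1)"
    and h6: "2*w(k-1) \<le> 2*a + M*k*(k+1)" using inv[of k] k1 by blast
  have "M*k*(k+1) \<le> 2*(M*k*k)" using k1 by (simp add: algebra_simps)
  then have "w (k-1) \<le> a + L" using h6 hML by linarith
  then show ?thesis using h1 h2 h3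
    by (intro exI[of _ w]) (auto simp: ascending_wave_def)
qed


lemma gen:
  fixes k r :: nat
  assumes k1: "1 \<le> k" and r1: "1 \<le> r"
  shows "\<forall>a L c. k^(2*r-1) \<le> L \<longrightarrow> (\<forall>x\<in>{a+1..a+L}. c x < r) \<longrightarrow>
     (\<exists>w col. ascending_wave w k \<and> (\<forall>i<k. w i \<in> {a+1..a+L} \<and> c (w i) = col))"
  using r1
proof (induction r rule: nat_induct_at_least)
  case base
  show ?case
  proof (intro allI impI)
    fix a L and c :: "nat \<Rightarrow> nat"
    assume L: "k^(2*1-1) \<le> L" and c: "\<forall>x\<in>{a+1..a+L}. c x < 1"
    have kL: "k \<le> L" using L by simp
    show "\<exists>w col. ascending_wave w k \<and> (\<forall>i<k. w i \<in> {a+1..a+L} \<and> c (w i) = col)"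
      using kL c by (intro exI[of _ "\<lambda>i. a+1+i"] exI[of _ 0]) (auto simp: ascending_wave_def)
  qed
next
  case (Suc r)
  define M where "M = k^(2*r-1)"
  have M1: "1 \<le> M" using k1 M_def by simp
  have eq: "k^(2*Suc r - 1) = M*k*k" using Suc(1) M_def
  proof -
    have "2*Suc r - 1 = Suc (Suc (2*r-1))" using Suc(1) by simp
    then have "k^(2*Suc r - 1) = k^(2*r-1) * k * k" by (simp only: power_Suc) (simp add: algebra_simps)
    then show ?thesis using M_def by simp
  qed
  show ?case
  proof (intro allI impI)
    fix a L and c :: "nat \<Rightarrow> nat"
    assume L: "k^(2*Suc r-1) \<le> L" and c: "\<forall>x\<in>{a+1..a+L}. c x < Suc r"
    show "\<exists>w col. ascending_wave w k \<and> (\<forall>i<k. w i \<in> {a+1..a+L} \<and> c (w i) = col)"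
    proof (cases "\<forall>b. a \<le> b \<longrightarrow> b+M \<le> a+L \<longrightarrow> (\<exists>x\<in>{b+1..b+M}. c x = r)")
      case True
      then show ?thesis using greedy[OF M1 _ k1, of L a c r] L eq by auto
    next
      case False
      then obtain b where b: "a \<le> b" "b+M \<le> a+L" "\<forall>x\<in>{b+1..b+M}. c x \<noteq> r" by auto
      have "\<forall>x\<in>{b+1..b+M}. c x < r"
      proof
        fix x assume x: "x \<in> {b+1..b+M}"
        then have "x \<in> {a+1..a+L}" using b by auto
        then have "c x < Suc r" using c by blast
        moreover have "c x \<noteq> r" using b x by blast
        ultimately show "c x < r" by simp
      qed
      then obtain w col where w: "ascending_wave w k" "\<forall>i<k. w i \<in> {b+1..b+M} \<and> c (w i) = col"
        using Suc(2) M_def by blast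
      show ?thesis using w b by (intro exI[of _ w] exI[of _ col]) auto
    qed
  qed
qed

theorem mainTheorem2:
  fixes k r :: nat
  assumes "1 \<le> k" and "1 \<le> r"
  shows "(\<exists>N. 0 < N \<and> AW_property k r N) \<and> AW k r \<le> k ^ (2 * r - 1)"
proof -
  have P: "AW_property k r (k ^ (2 * r - 1))"
    unfolding AW_property_def
  proof (intro allI impI)
    fix c :: "nat \<Rightarrow> nat"
    assume "\<forall>x\<in>{1..k ^ (2 * r - 1)}. c x < r"
    then show "\<exists>w. ascending_wave w k \<and> (\<forall>i<k. w i \<in> {1..k ^ (2 * r - 1)}) \<and> (\<exists>col. \<forall>i<k. c (w i) = col)"
      using gen[OF assms, rule_format, of "k ^ (2 * r - 1)" 0 c] by auto
  qed
  have pos: "0 < k ^ (2 * r - 1)" using assms by simp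
  have "AW k r \<le> k ^ (2 * r - 1)" unfolding AW_def
    by (rule Least_le) (use P pos in auto)
  then show ?thesis using P pos by blast
qed

end
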